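(* Let $\mathbb P_{\mathcal A}$ be any probability measure on $\mathcal A$, let $\xi=\lambda^{-1}$, and let $f\colon\Delta\to\Delta$ be the Bernoulli Young tower defined by $(\mathcal A,\mathbb P_{\mathcal A})$, $h_{\mathcal A}$ and $\xi$. Let $\pi\colon\Delta\to\Lambda$ be as defined in the context. Then for all $a,b\in\Delta$, $$d_\Lambda(\pi(a),\pi(b))\le C_\Lambda\, d(a,b),\qquad C_\Lambda=\lambda C_\ell\operatorname{diam}\Lambda.$$
   Context: Nonuniformly expanding map: $(\Lambda,d_\Lambda)$ is a bounded complete metric space and $T\colon\Lambda\to\Lambda$ is Borel measurable. $Y\subset\Lambda$ is closed, $m$ is a Borel probability measure on $Y$, and $\alpha$ is an at most countable partition of $Y$ (modulo an $m$-null set) with $m(a)>0$ and $m(\bar a\setminus a)=0$ for all $a\in\alpha$. $\tau\colon Y\to\mathbb{N}$ is integrable, constant on each $a\in\alpha$ with value $\tau(a)$, and $T^{\tau(y)}(y)\in Y$ for all $y\in Y$. There are constants $0<\eta\le 1$, $\lambda>1$, $C_\ell,K\ge1$ and for each $a\in\alpha$ a map $T_a\colon\Lambda\to\Lambda$ with $T_a^\ell=T^\ell$ $m$-a.s. on $\bar a$ for $0\le\ell<\tau(a)$, such that $T_{Y,a}:=T_a^{\tau(a)}$ is a bijection $\bar a\to Y$ and for all $x,y\in\bar a$: (i) $d_\Lambda(T_{Y,a}x,T_{Y,a}y)\ge\lambda d_\Lambda(x,y)$; (ii) $d_\Lambda(T_a^\ell x,T_a^\ell y)\le C_\ell\, d_\Lambda(T_{Y,a}x,T_{Y,a}y)$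 for $0\le \ell<\tau(a)$; (iii) $T_{Y,a}\colon\bar a\to Y$ is nonsingular and its inverse Jacobian $\zeta=\frac{dm}{dm\circ T_{Y,a}}$ satisfies $|\log\zeta(x)-\log\zeta(y)|\le K d_\Lambda(T_{Y,a}x,T_{Y,a}y)^\eta$. Words: $\mathcal A$ is the set of all nonempty finite words $w=a_0\cdots a_{n-1}$ over $\alpha$; $h_{\mathcal A}(w)=\tau(a_0)+\dots+\tau(a_{n-1})$, $T_{Y,w}=T_{Y,a_{n-1}}\circ\cdots\circ T_{Y,a_0}$, $Y_w=(T_{Y,a_{n-1}}\circ\cdots\circ T_{Y,a_0})^{-1}(Y)$. For a word $w=a_0\cdots a_{n-1}$ and $0\le\ell<h_{\mathcal A}(w)$, writing $\ell=\tau(a_0)+\dots+\tau(a_{j-1})+r$ with $0\le r<\tau(a_j)$, set $T_w^\ell=T_{a_j}^r\circ T_{Y,a_{j-1}}\circ\cdots\circ T_{Y,a_0}$ on $Y_w$. Concatenation of words is denoted $w_0w_1\cdots w_n$. Bernoulli Young tower: given an at most countable probability space $(\mathcal{A},\mathbb{P}_{\mathcal A})$, an integrable $h_{\mathcal A}\colon\mathcal A\to\mathbb N$ and $0<\xi<1$, let $(X,\mathbb P_X)=(\mathcal A^{\mathbb N},\mathbb P_{\mathcal A}^{\mathbb N})$ with left shift $f_X$, $h(a_0,a_1,\dots)=h_{\mathcal A}(a_0)$, $\Delta=\{(x,\ell)\in X\times\mathbb Z:0\le\ell<h(x)\}$, $f(x,\ell)=(x,\ell+1)$ if $\ell<h(x)-1$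 and $f(x,\ell)=(f_Xx,0)$ if $\ell=h(x)-1$. On $X$, $d(x,y)=\xi^{s(x,y)}$ with $s((a_j),(b_j))=\inf\{j\ge0:a_j\ne b_j\}$; on $\Delta$, $d((x,k),(y,j))=1$ if $k\ne j$ and $=d(x,y)$ if $k=j$. $\mathbb P$ is the $f$-invariant probability on $\Delta$ with $\mathbb P(A\times\{\ell\})=\bar h^{-1}\mathbb P_X(A)$ for $A\subset\{h\ge\ell+1\}$, $\bar h=\int h\,d\mathbb P_X$. The base $\Delta_0=\{(x,0)\}$ is identified with $X$. The map $\pi$: for $x=(w_0,w_1,\dots)\in X$, $\pi_X(x)$ is the unique point of $\bigcap_{n\ge0}Y_{w_0\cdots w_n}$ (nested closed sets with diameters $\to0$), and $\pi((w_0,w_1,\dots),\ell)=T_{w_0}^\ell(\pi_X(w_0,w_1,\dots))$. *)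

theory Defs
  imports "HOL-Probability.Probability"
begin

definition words :: "'a set set \<Rightarrow> 'a set list set" where
  "words \<alpha> = {w. w \<noteq> [] \<and> set w \<subseteq> \<alpha>}"

definition hword :: "('a set \<Rightarrow> nat) \<Rightarrow> 'a set list \<Rightarrow> nat" where
  "hword \<tau>A w = sum_list (map \<tau>A w)"

definition TYa :: "('a set \<Rightarrow> 'a \<Rightarrow> 'a) \<Rightarrow> ('a set \<Rightarrow> nat) \<Rightarrow> 'a set \<Rightarrow> 'a \<Rightarrow> 'a" where
  "TYa Ta \<tau>A a = Ta a ^^ \<tau>A a"

fun cyl :: "'a::topological_space set \<Rightarrow> ('a set \<Rightarrow> 'a \<Rightarrow> 'a) \<Rightarrow> 'a set list \<Rightarrow> 'a set" where
  "cyl Y TY [] = Y"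
| "cyl Y TY (a # w) = {y \<in> closure a. TY a y \<in> cyl Y TY w}"

fun Tword :: "('a set \<Rightarrow> 'a \<Rightarrow> 'a) \<Rightarrow> ('a set \<Rightarrow> nat) \<Rightarrow> 'a set list \<Rightarrow> nat \<Rightarrow> 'a \<Rightarrow> 'a" where
  "Tword Ta \<tau>A [] l = id"
| "Tword Ta \<tau>A (a # w) l =
     (if l < \<tau>A a then Ta a ^^ l else Tword Ta \<tau>A w (l - \<tau>A a) \<circ> (Ta a ^^ \<tau>A a))"

definition towerX :: "'a set set \<Rightarrow> (nat \<Rightarrow> 'a set list) set" where
  "towerX \<alpha> = {x. \<forall>j. x j \<in> words \<alpha>}"

definition tower :: "'a set set \<Rightarrow> ('a set \<Rightarrow> nat) \<Rightarrow> ((nat \<Rightarrow> 'a set list) \<times> nat) set" where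
  "tower \<alpha> \<tau>A = {(x, l). x \<in> towerX \<alpha> \<and> l < hword \<tau>A (x 0)}"

definition dX :: "real \<Rightarrow> (nat \<Rightarrow> 'b) \<Rightarrow> (nat \<Rightarrow> 'b) \<Rightarrow> real" where
  "dX \<xi> x y = (if x = y then 0 else \<xi> ^ (LEAST j. x j \<noteq> y j))"

definition dTower :: "real \<Rightarrow> ((nat \<Rightarrow> 'b) \<times> nat) \<Rightarrow> ((nat \<Rightarrow> 'b) \<times> nat) \<Rightarrow> real" where
  "dTower \<xi> p q = (if snd p \<noteq> snd q then 1 else dX \<xi> (fst p) (fst q))"

definition piX :: "'a::topological_space set \<Rightarrow> ('a set \<Rightarrow> 'a \<Rightarrow> 'a) \<Rightarrow> ('a set \<Rightarrow> nat)
    \<Rightarrow> (nat \<Rightarrow> 'a set list) \<Rightarrow> 'a" where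
  "piX Y Ta \<tau>A x = (THE p. p \<in> (\<Inter>n. cyl Y (TYa Ta \<tau>A) (concat (map x [0..<Suc n]))))"

definition piTower :: "'a::topological_space set \<Rightarrow> ('a set \<Rightarrow> 'a \<Rightarrow> 'a) \<Rightarrow> ('a set \<Rightarrow> nat)
    \<Rightarrow> (nat \<Rightarrow> 'a set list) \<times> nat \<Rightarrow> 'a" where
  "piTower Y Ta \<tau>A p = Tword Ta \<tau>A (fst p 0) (snd p) (piX Y Ta \<tau>A (fst p))"

end

theory Submission
  imports Defs
begin

lemma cyl_sub_Y:
  assumes "closed Y" "\<forall>a\<in>\<alpha>. a \<subseteq> Y" "set w \<subseteq> \<alpha>"
  shows "cyl Y TY w \<subseteq> Y"
  using assms(3)
proof (induction w)
  case Nil then show ?case by simp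
next
  case (Cons a w)
  have "closure a \<subseteq> Y" using assms(1,2) Cons.prems by (simp add: closure_minimal)
  then show ?case by auto
qed

lemma cyl_dist:
  fixes Y :: "'a::metric_space set"
  assumes lam: "lam > 0" and D: "\<And>x y::'a. dist x y \<le> D"
    and expand: "\<forall>a\<in>\<alpha>. \<forall>x\<in>closure a. \<forall>y\<in>closure a. dist (TY a x) (TY a y) \<ge> lam * dist x y"
    and "set w \<subseteq> \<alpha>" "u \<in> cyl Y TY w" "v \<in> cyl Y TY w"
  shows "dist u v \<le> D / lam ^ length w"
  using assms(4-6)
proof (induction w arbitrary: u v)
  case Nil then show ?case using D by simp
next
  case (Cons a w)
  have a: "a \<in> \<alpha>" "set w \<subseteq> \<alpha>" using Cons.prems by auto
  have uv: "u \<in> closure a" "v \<in> closure a" "TY a u \<in> cyl Y TY w" "TY a v \<in> cyl Y TY w"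
    using Cons.prems by auto
  have "lam * dist u v \<le> dist (TY a u) (TY a v)" using expand a uv by blast
  also have "\<dots> \<le> D / lam ^ length w" using Cons.IH[OF a(2) uv(3,4)] .
  finally have "lam * dist u v \<le> D / lam ^ length w" .
  then show ?case using lam by (simp add: field_simps mult.commute mult.left_commute)
qed

lemma Tword_dist:
  fixes Y :: "'a::metric_space set"
  assumes lam: "lam > 1" and Cl: "Cl \<ge> 0" and D: "\<And>x y::'a. dist x y \<le> D"
    and expand: "\<forall>a\<in>\<alpha>. \<forall>x\<in>closure a. \<forall>y\<in>closure a. dist (TYa Ta \<tau>A a x) (TYa Ta \<tau>A a y) \<ge> lam * dist x y"
    and bdd: "\<forall>a\<in>\<alpha>. \<forall>x\<in>closure a. \<forall>y\<in>closure a. \<forall>l<\<tau>A a.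
         dist ((Ta a ^^ l) x) ((Ta a ^^ l) y) \<le> Cl * dist (TYa Ta \<tau>A a x) (TYa Ta \<tau>A a y)"
    and "set w \<subseteq> \<alpha>" "set V \<subseteq> \<alpha>" "u \<in> cyl Y (TYa Ta \<tau>A) (w @ V)" "v \<in> cyl Y (TYa Ta \<tau>A) (w @ V)"
    and "l < hword \<tau>A w"
  shows "dist (Tword Ta \<tau>A w l u) (Tword Ta \<tau>A w l v) \<le> Cl * D / lam ^ length V"
  using assms(6-10)
proof (induction w arbitrary: u v l)
  case Nil then show ?case by (simp add: hword_def)
next
  case (Cons a w)
  have a: "a \<in> \<alpha>" "set w \<subseteq> \<alpha>" using Cons.prems by auto
  have uv: "u \<in> closure a" "v \<in> closure a" "TYa Ta \<tau>A a u \<in> cyl Y (TYa Ta \<tau>A) (w @ V)"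
     "TYa Ta \<tau>A a v \<in> cyl Y (TYa Ta \<tau>A) (w @ V)" using Cons.prems by auto
  have D0: "D \<ge> 0" using D[of u u] by simp
  show ?case
  proof (cases "l < \<tau>A a")
    case True
    have "dist (Tword Ta \<tau>A (a # w) l u) (Tword Ta \<tau>A (a # w) l v) = dist ((Ta a ^^ l) u) ((Ta a ^^ l) v)"
      using True by simp
    also have "\<dots> \<le> Cl * dist (TYa Ta \<tau>A a u) (TYa Ta \<tau>A a v)" using bdd a uv True by blast
    also have "\<dots> \<le> Cl * (D / lam ^ length (w @ V))"
      apply (rule mult_left_mono[OF _ Cl])
      apply (rule cyl_dist[of lam D \<alpha> "TYa Ta \<tau>A" "w @ V" _ Y])
      using lam D expand a Cons.prems uv by auto
    also have "\<dots> \<le> Cl * (D / lam ^ length V)"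
      apply (rule mult_left_mono[OF _ Cl])
      apply (rule divide_left_mono[OF _ D0])
      using lam by (auto intro!: power_increasing)
    finally show ?thesis by simp
  next
    case False
    have "Tword Ta \<tau>A (a # w) l = Tword Ta \<tau>A w (l - \<tau>A a) \<circ> TYa Ta \<tau>A a"
      using False by (simp add: TYa_def)
    moreover have "l - \<tau>A a < hword \<tau>A w" using Cons.prems(5) False by (simp add: hword_def)
    ultimately show ?thesis using Cons.IH[OF a(2) Cons.prems(2) uv(3,4)] by simp
  qed
qed

fun Hc :: "(nat \<Rightarrow> 'a \<Rightarrow> 'a) \<Rightarrow> nat \<Rightarrow> nat \<Rightarrow> 'a \<Rightarrow> 'a" where
  "Hc G k 0 y = y"
| "Hc G k (Suc j) y = G k (Hc G (Suc k) j y)"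

lemma Hc_add: "Hc G k (j + i) y = Hc G k j (Hc G (k + j) i y)"
  by (induction j arbitrary: k) auto

lemma Hc_in: "(\<forall>k y. y \<in> Y \<longrightarrow> G k y \<in> Y) \<Longrightarrow> y \<in> Y \<Longrightarrow> Hc G k j y \<in> Y"
  by (induction j arbitrary: k) auto

lemma Hc_lip:
  fixes Y :: "'a::metric_space set"
  assumes GY: "\<forall>k y. y \<in> Y \<longrightarrow> G k y \<in> Y"
    and lip: "\<forall>k. \<forall>y\<in>Y. \<forall>y'\<in>Y. dist (G k y) (G k y') \<le> dist y y' / lam"
    and lam: "lam > 0" and "u \<in> Y" "v \<in> Y"
  shows "dist (Hc G k j u) (Hc G k j v) \<le> dist u v / lam ^ j"
proof (induction j arbitrary: k)
  case 0 then show ?case by simp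
next
  case (Suc j)
  have "dist (Hc G k (Suc j) u) (Hc G k (Suc j) v) \<le> dist (Hc G (Suc k) j u) (Hc G (Suc k) j v) / lam"
    using lip Hc_in[OF GY assms(4)] Hc_in[OF GY assms(5)] by simp
  also have "\<dots> \<le> (dist u v / lam ^ j) / lam"
    by (rule divide_right_mono[OF Suc.IH]) (use lam in simp)
  finally show ?case by (simp add: field_simps)
qed

lemma cyl_exists:
  fixes Y :: "'a::{metric_space,complete_space} set"
  assumes Y: "closed Y" "Y \<noteq> {}" and sub: "\<forall>a\<in>\<alpha>. a \<subseteq> Y"
    and bij: "\<forall>a\<in>\<alpha>. bij_betw (TY a) (closure a) Y"
    and expand: "\<forall>a\<in>\<alpha>. \<forall>x\<in>closure a. \<forall>y\<in>closure a. dist (TY a x) (TY a y) \<ge> lam * dist x y"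
    and lam: "lam > 1" and D: "\<And>x y::'a. dist x y \<le> D"
    and b: "\<And>i. b i \<in> \<alpha>"
  shows "\<exists>z. \<forall>N. z \<in> cyl Y TY (map b [0..<N])"
proof -
  define G where "G k = inv_into (closure (b k)) (TY (b k))" for k
  have G1: "G k y \<in> closure (b k)" if "y \<in> Y" for k y
    using bij b that unfolding G_def bij_betw_def by (metis inv_into_into)
  have G2: "TY (b k) (G k y) = y" if "y \<in> Y" for k y
    using bij b that unfolding G_def bij_betw_def by (metis f_inv_into_f)
  have clY: "closure (b k) \<subseteq> Y" for k using sub b Y(1) by (simp add: closure_minimal)
  have GY: "\<forall>k y. y \<in> Y \<longrightarrow> G k y \<in> Y" using G1 clY by blast
  have Glip: "\<forall>k. \<forall>y\<in>Y. \<forall>y'\<in>Y. dist (G k y) (G k y') \<le> dist y y' / lam"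
  proof (intro allI ballI)
    fix k y y' assume yy: "y \<in> Y" "y' \<in> Y"
    then have "lam * dist (G k y) (G k y') \<le> dist (TY (b k) (G k y)) (TY (b k) (G k y'))"
      using expand b G1 by blast
    then show "dist (G k y) (G k y') \<le> dist y y' / lam" using G2 yy lam by (simp add: field_simps)
  qed
  have lam0: "lam > 0" using lam by simp
  have D0: "D \<ge> 0" using D[of undefined undefined] by simp
  obtain y0 where y0: "y0 \<in> Y" using Y(2) by auto
  define z where "z k = lim (\<lambda>j. Hc G k j y0)" for k
  have cauchy: "Cauchy (\<lambda>j. Hc G k j y0)" for k
  proof (rule metric_CauchyI)
    fix e :: real assume e: "e > 0"
    obtain M where M: "D / e < lam ^ M" using real_arch_pow[OF lam] by blast
    have bnd: "dist (Hc G k m y0) (Hc G k n y0) \<le> D / lam ^ n" if "n \<le> m" for m n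
    proof -
      have "Hc G k m y0 = Hc G k n (Hc G (k+n) (m-n) y0)" using Hc_add[of G k n "m-n" y0] that by simp
      then have "dist (Hc G k m y0) (Hc G k n y0) = dist (Hc G k n (Hc G (k+n) (m-n) y0)) (Hc G k n y0)" by simp
      also have "\<dots> \<le> dist (Hc G (k+n) (m-n) y0) y0 / lam ^ n"
        by (rule Hc_lip[OF GY Glip lam0 Hc_in[OF GY y0] y0])
      also have "\<dots> \<le> D / lam ^ n" by (rule divide_right_mono[OF D]) (use lam0 in simp)
      finally show ?thesis .
    qed
    have DM: "D / lam ^ M < e" using M e lam0 by (simp add: field_simps)
    have mono: "D / lam ^ n \<le> D / lam ^ M" if "M \<le> n" for n
      apply (rule divide_left_mono[OF _ D0])
      using lam that by (auto intro!: power_increasing)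
    show "\<exists>M. \<forall>m\<ge>M. \<forall>n\<ge>M. dist (Hc G k m y0) (Hc G k n y0) < e"
    proof (intro exI allI impI)
      fix m n assume mn: "M \<le> m" "M \<le> n"
      show "dist (Hc G k m y0) (Hc G k n y0) < e"
      proof (cases "n \<le> m")
        case True
        then show ?thesis using bnd[OF True] mono[OF mn(2)] DM by linarith
      next
        case False
        then have "m \<le> n" by simp
        then show ?thesis using bnd[of m n] mono[OF mn(1)] DM dist_commute[of "Hc G k m y0" "Hc G k n y0"] by linarith
      qed
    qed
  qed
  have conv: "(\<lambda>j. Hc G k j y0) \<longlonglongrightarrow> z k" for k
    unfolding z_def using Cauchy_convergent[OF cauchy[of k]] by (simp add: convergent_LIMSEQ_iff)
  have zY: "z k \<in> Y" for k
    by (rule closed_sequentially[OF Y(1) _ conv]) (rule Hc_in[OF GY y0])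
  have zcl: "z k \<in> closure (b k)" for k
  proof (rule closed_sequentially[of _ "\<lambda>j. Hc G k (Suc j) y0"])
    show "closed (closure (b k))" by simp
    show "Hc G k (Suc j) y0 \<in> closure (b k)" for j using G1 Hc_in[OF GY y0] by simp
    show "(\<lambda>j. Hc G k (Suc j) y0) \<longlonglongrightarrow> z k" using LIMSEQ_Suc[OF conv[of k]] .
  qed
  have zG: "z k = G k (z (Suc k))" for k
  proof -
    have "(\<lambda>j. G k (Hc G (Suc k) j y0)) \<longlonglongrightarrow> G k (z (Suc k))"
    proof (rule tendsto_dist_iff[THEN iffD2], rule Lim_null_comparison)
      show "\<forall>\<^sub>F j in sequentially. norm (dist (G k (Hc G (Suc k) j y0)) (G k (z (Suc k))))
             \<le> dist (Hc G (Suc k) j y0) (z (Suc k)) / lam"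
      proof (rule always_eventually, rule allI)
        fix j
        have "dist (G k (Hc G (Suc k) j y0)) (G k (z (Suc k))) \<le> dist (Hc G (Suc k) j y0) (z (Suc k)) / lam"
          using Glip Hc_in[OF GY y0] zY by blast
        then show "norm (dist (G k (Hc G (Suc k) j y0)) (G k (z (Suc k)))) \<le> dist (Hc G (Suc k) j y0) (z (Suc k)) / lam"
          by simp
      qed
      show "((\<lambda>j. dist (Hc G (Suc k) j y0) (z (Suc k)) / lam) \<longlonglongrightarrow> 0)"
        by (rule tendsto_divide_zero) (rule conv[of "Suc k", THEN tendsto_dist_iff[THEN iffD1]])
    qed
    moreover have "(\<lambda>j. G k (Hc G (Suc k) j y0)) \<longlonglongrightarrow> z k"
      using LIMSEQ_Suc[OF conv[of k]] by simp
    ultimately show ?thesis by (rule LIMSEQ_unique[rotated])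
  qed
  have zT: "TY (b k) (z k) = z (Suc k)" for k
    by (subst zG[of k]) (rule G2[OF zY])
  have zc: "z k \<in> cyl Y TY (map b [k..<k+N])" for N k
  proof (induction N arbitrary: k)
    case 0 then show ?case using zY by simp
  next
    case (Suc N)
    have "[k..<k+Suc N] = k # [Suc k..<Suc k + N]" by (simp add: upt_conv_Cons)
    then show ?case using Suc.IH[of "Suc k"] zcl zT by simp
  qed
  show ?thesis
  proof (intro exI allI)
    fix N show "z 0 \<in> cyl Y TY (map b [0..<N])" using zc[of 0 N] by simp
  qed
qed

lemma len_concat:
  assumes "\<forall>j. x j \<noteq> []"
  shows "length (concat (map x [i..<j])) \<ge> j - i"
proof (induction j)
  case 0 then show ?case by simp
next
  case (Suc j)
  have "x j \<noteq> []" using assms by blast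
  then have "length (x j) \<ge> 1" by (cases "x j") auto
  then show ?case using Suc by (cases "i \<le> j") (auto simp: Suc_diff_le)
qed

lemma piX_mem:
  fixes Y :: "'a::{metric_space,complete_space} set"
  assumes Y: "closed Y" "Y \<noteq> {}" and sub: "\<forall>a\<in>\<alpha>. a \<subseteq> Y"
    and bij: "\<forall>a\<in>\<alpha>. bij_betw (TYa Ta \<tau>A a) (closure a) Y"
    and expand: "\<forall>a\<in>\<alpha>. \<forall>x\<in>closure a. \<forall>y\<in>closure a. dist (TYa Ta \<tau>A a x) (TYa Ta \<tau>A a y) \<ge> lam * dist x y"
    and lam: "lam > 1" and D: "\<And>x y::'a. dist x y \<le> D"
    and x: "\<forall>j. x j \<in> words \<alpha>"
  shows "piX Y Ta \<tau>A x \<in> cyl Y (TYa Ta \<tau>A) (concat (map x [0..<Suc n]))"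
proof -
  define W where "W n = concat (map x [0..<Suc n])" for n
  have xne: "\<forall>j. x j \<noteq> []" and xa: "\<And>j. set (x j) \<subseteq> \<alpha>" using x by (auto simp: words_def)
  have Wa: "set (W n) \<subseteq> \<alpha>" for n using xa by (auto simp: W_def)
  have Wlen: "length (W n) \<ge> Suc n" for n
  proof -
    have "length (x n) \<ge> 1" using xne by (cases "x n") auto
    moreover have "length (concat (map x [0..<n])) \<ge> n" using len_concat[OF xne, where i=0 and j=n] by simp
    ultimately show ?thesis by (simp add: W_def)
  qed
  have Wpre: "\<exists>r. W m = W n @ r" if "n \<le> m" for n m
  proof -
    have "[0..<Suc m] = [0..<Suc n] @ [Suc n..<Suc m]" using that upt_add_eq_append[of 0 "Suc n" "m - n"] by simp
    then show ?thesis by (simp add: W_def)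
  qed
  define b where "b i = W i ! i" for i
  have Wb: "W n = map b [0..<length (W n)]" for n
  proof (rule nth_equalityI)
    show "length (W n) = length (map b [0..<length (W n)])" by simp
    fix i assume i: "i < length (W n)"
    have "b i = W n ! i"
    proof (cases "i \<le> n")
      case True
      then obtain r where r: "W n = W i @ r" using Wpre by blast
      have "i < length (W i)" using Wlen[of i] by simp
      then show ?thesis unfolding b_def r by (simp add: nth_append)
    next
      case False
      then obtain r where r: "W i = W n @ r" using Wpre[of n i] by auto
      show ?thesis unfolding b_def r using i by (simp add: nth_append)
    qed
    then show "W n ! i = map b [0..<length (W n)] ! i" using i by simp
  qed
  have b: "b i \<in> \<alpha>" for i
  proof -
    have "i < length (W i)" using Wlen[of i] by simp
    then have "b i \<in> set (W i)" unfolding b_def by simp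
    then show ?thesis using Wa by blast
  qed
  obtain z where z: "\<And>N. z \<in> cyl Y (TYa Ta \<tau>A) (map b [0..<N])"
    using cyl_exists[where b=b, OF Y sub bij expand lam D b] by blast
  have zW: "z \<in> cyl Y (TYa Ta \<tau>A) (W n)" for n using z[of "length (W n)"] Wb[of n] by simp
  have lam0: "lam > 0" using lam by simp
  have D0: "D \<ge> 0" using D[of undefined undefined] by simp
  have uniq: "p = q" if p: "\<And>n. p \<in> cyl Y (TYa Ta \<tau>A) (W n)" and q: "\<And>n. q \<in> cyl Y (TYa Ta \<tau>A) (W n)" for p q
  proof (rule ccontr)
    assume "p \<noteq> q"
    then have pq: "dist p q > 0" by simp
    obtain n where n: "D / dist p q < lam ^ n" using real_arch_pow[OF lam] by blast
    have "dist p q \<le> D / lam ^ length (W n)" by (rule cyl_dist[OF lam0 D expand Wa p q])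
    also have "\<dots> \<le> D / lam ^ n"
      apply (rule divide_left_mono[OF _ D0])
      using lam Wlen[of n] by (auto intro!: power_increasing)
    also have "\<dots> < dist p q" using n pq lam0 by (simp add: field_simps)
    finally show False by simp
  qed
  have ex: "\<exists>!p. p \<in> (\<Inter>n. cyl Y (TYa Ta \<tau>A) (W n))"
  proof (rule ex1I[of _ z])
    show "z \<in> (\<Inter>n. cyl Y (TYa Ta \<tau>A) (W n))" using zW by blast
    fix p assume "p \<in> (\<Inter>n. cyl Y (TYa Ta \<tau>A) (W n))"
    then show "p = z" using uniq zW by blast
  qed
  have "piX Y Ta \<tau>A x \<in> (\<Inter>n. cyl Y (TYa Ta \<tau>A) (W n))"
    unfolding piX_def W_def[symmetric] by (rule theI'[OF ex])
  then show ?thesis unfolding W_def by blast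
qed


theorem proposition4p3:
  fixes T :: "'a::complete_space \<Rightarrow> 'a"
    and Y :: "'a set"
    and m :: "'a measure"
    and \<alpha> :: "'a set set"
    and \<tau> :: "'a \<Rightarrow> nat"
    and \<tau>A :: "'a set \<Rightarrow> nat"
    and Ta :: "'a set \<Rightarrow> 'a \<Rightarrow> 'a"
    and \<eta> lam Cl K :: real
    and PA :: "'a set list pmf"
  assumes bounded_Lambda: "bounded (UNIV :: 'a set)"
    and T_meas: "T \<in> borel_measurable borel"
    and Y_closed: "closed Y"
    and m_sets: "sets m = sets (restrict_space borel Y)"
    and m_prob: "prob_space m"
    and \<alpha>_countable: "countable \<alpha>"
    and \<alpha>_sub: "\<forall>a\<in>\<alpha>. a \<subseteq> Y \<and> a \<in> sets m"
    and \<alpha>_disj: "disjoint \<alpha>"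
    and \<alpha>_cover: "emeasure m (Y - \<Union>\<alpha>) = 0"
    and \<alpha>_pos: "\<forall>a\<in>\<alpha>. emeasure m a > 0"
    and \<alpha>_bdry: "\<forall>a\<in>\<alpha>. emeasure m (closure a - a) = 0"
    and \<tau>_pos: "\<forall>y\<in>Y. \<tau> y \<ge> 1"
    and \<tau>_int: "integrable m (\<lambda>y. real (\<tau> y))"
    and \<tau>_const: "\<forall>a\<in>\<alpha>. \<forall>y\<in>a. \<tau> y = \<tau>A a"
    and \<tau>_return: "\<forall>y\<in>Y. (T ^^ \<tau> y) y \<in> Y"
    and \<eta>: "0 < \<eta>" "\<eta> \<le> 1"
    and lam: "lam > 1"
    and Cl: "Cl \<ge> 1"
    and K: "K \<ge> 1"
    and Ta_ae: "\<forall>a\<in>\<alpha>. \<forall>l<\<tau>A a. AE x in m. x \<in> closure a \<longrightarrow> (Ta a ^^ l) x = (T ^^ l) x"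
    and TY_bij: "\<forall>a\<in>\<alpha>. bij_betw (TYa Ta \<tau>A a) (closure a) Y"
    and expand: "\<forall>a\<in>\<alpha>. \<forall>x\<in>closure a. \<forall>y\<in>closure a.
         dist (TYa Ta \<tau>A a x) (TYa Ta \<tau>A a y) \<ge> lam * dist x y"
    and bdd_dist: "\<forall>a\<in>\<alpha>. \<forall>x\<in>closure a. \<forall>y\<in>closure a. \<forall>l<\<tau>A a.
         dist ((Ta a ^^ l) x) ((Ta a ^^ l) y) \<le> Cl * dist (TYa Ta \<tau>A a x) (TYa Ta \<tau>A a y)"
    and TY_meas: "\<forall>a\<in>\<alpha>. \<forall>E\<in>sets m. {x \<in> closure a. TYa Ta \<tau>A a x \<in> E} \<in> sets m"
    and nonsingular: "\<forall>a\<in>\<alpha>. \<forall>B\<in>sets m. B \<subseteq> closure a \<longrightarrow>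
         TYa Ta \<tau>A a ` B \<in> sets m \<and>
         (emeasure m B = 0 \<longleftrightarrow> emeasure m (TYa Ta \<tau>A a ` B) = 0)"
    and jacobian: "\<forall>a\<in>\<alpha>. \<exists>\<zeta> :: 'a \<Rightarrow> real.
         (\<forall>x\<in>closure a. \<zeta> x > 0) \<and>
         (\<forall>B\<in>sets m. B \<subseteq> closure a \<longrightarrow>
            emeasure m B = (\<integral>\<^sup>+ y. indicator (TYa Ta \<tau>A a ` B) y *
                 ennreal (\<zeta> (inv_into (closure a) (TYa Ta \<tau>A a) y)) \<partial>m)) \<and>
         (\<forall>x\<in>closure a. \<forall>y\<in>closure a.
            \<bar>ln (\<zeta> x) - ln (\<zeta> y)\<bar> \<le> K * dist (TYa Ta \<tau>A a x) (TYa Ta \<tau>A a y) powr \<eta>)"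
    and PA_words: "set_pmf PA \<subseteq> words \<alpha>"
  shows "\<forall>p\<in>tower \<alpha> \<tau>A. \<forall>q\<in>tower \<alpha> \<tau>A.
           dist (piTower Y Ta \<tau>A p) (piTower Y Ta \<tau>A q)
             \<le> (lam * Cl * diameter (UNIV :: 'a set)) * dTower (1 / lam) p q"
proof (intro ballI)
  fix p q assume p: "p \<in> tower \<alpha> \<tau>A" and q: "q \<in> tower \<alpha> \<tau>A"
  define D where "D = diameter (UNIV::'a set)"
  have Dle: "\<And>u v::'a. dist u v \<le> D" unfolding D_def
    by (rule diameter_bounded_bound[OF bounded_Lambda]) auto
  have D0: "D \<ge> 0" using Dle[of undefined undefined] by simp
  obtain x l where pxl: "p = (x, l)" by (cases p)
  obtain y l' where qyl: "q = (y, l')" by (cases q)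
  have xT: "\<forall>j. x j \<in> words \<alpha>" "l < hword \<tau>A (x 0)" using p pxl by (auto simp: tower_def towerX_def)
  have yT: "\<forall>j. y j \<in> words \<alpha>" "l' < hword \<tau>A (y 0)" using q qyl by (auto simp: tower_def towerX_def)
  have sub: "\<forall>a\<in>\<alpha>. a \<subseteq> Y" using \<alpha>_sub by blast
  have Yne: "Y \<noteq> {}"
  proof -
    have "x 0 \<noteq> []" "set (x 0) \<subseteq> \<alpha>" using xT(1) by (auto simp: words_def)
    then obtain a where a: "a \<in> \<alpha>" by (cases "x 0") auto
    then have "a \<noteq> {}" using \<alpha>_pos by (metis emeasure_empty less_irrefl)
    then show ?thesis using a sub by blast
  qed
  have C1: "1 \<le> lam * Cl" using mult_mono[of 1 lam 1 Cl] lam Cl by simp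
  have triv: "dist (piTower Y Ta \<tau>A p) (piTower Y Ta \<tau>A q) \<le> lam * Cl * D"
  proof -
    have "dist (piTower Y Ta \<tau>A p) (piTower Y Ta \<tau>A q) \<le> 1 * D" using Dle by simp
    also have "\<dots> \<le> lam * Cl * D" by (rule mult_right_mono[OF C1 D0])
    finally show ?thesis .
  qed
  show "dist (piTower Y Ta \<tau>A p) (piTower Y Ta \<tau>A q)
             \<le> (lam * Cl * diameter (UNIV :: 'a set)) * dTower (1 / lam) p q"
  proof (cases "l = l'")
    case False
    then show ?thesis using triv pxl qyl by (simp add: dTower_def D_def)
  next
    case ll: True
    show ?thesis
    proof (cases "x = y")
      case True then show ?thesis using pxl qyl ll by (simp add: dTower_def dX_def)
    next
      case xy: False
      define s where "s = (LEAST j. x j \<noteq> y j)"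
      have dT: "dTower (1 / lam) p q = (1 / lam) ^ s" using pxl qyl ll xy by (simp add: dTower_def dX_def s_def)
      show ?thesis
      proof (cases s)
        case 0 then show ?thesis using triv dT by (simp add: D_def)
      next
        case (Suc t)
        have eqj: "x j = y j" if "j < s" for j using not_less_Least[OF that[unfolded s_def]] by simp
        have x0: "x 0 = y 0" using eqj Suc by simp
        have mxy: "map x [0..<Suc t] = map y [0..<Suc t]" using eqj Suc by simp
        define V where "V = concat (map x [Suc 0..<Suc t])"
        have u: "[0..<Suc t] = 0 # [Suc 0..<Suc t]" by (rule upt_conv_Cons) (rule zero_less_Suc)
        have WV: "concat (map x [0..<Suc t]) = x 0 @ V" unfolding V_def u by simp
        have xne: "\<forall>j. x j \<noteq> []" using xT(1) by (auto simp: words_def)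
        have Vlen: "length V \<ge> t" using len_concat[OF xne, where i="Suc 0" and j="Suc t"] unfolding V_def by simp
        have Va: "set V \<subseteq> \<alpha>" "set (x 0) \<subseteq> \<alpha>" using xT(1) unfolding V_def by (auto simp: words_def)
        have bij: "\<forall>a\<in>\<alpha>. bij_betw (TYa Ta \<tau>A a) (closure a) Y" using TY_bij .
        have px: "piX Y Ta \<tau>A x \<in> cyl Y (TYa Ta \<tau>A) (x 0 @ V)"
          using piX_mem[OF Y_closed Yne sub bij expand lam Dle xT(1), of t] WV by simp
        have py: "piX Y Ta \<tau>A y \<in> cyl Y (TYa Ta \<tau>A) (x 0 @ V)"
        proof -
          have Wy: "concat (map y [0..<Suc t]) = x 0 @ V" using WV unfolding mxy .
          show ?thesis using piX_mem[OF Y_closed Yne sub bij expand lam Dle yT(1), of t] unfolding Wy .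
        qed
        have "dist (piTower Y Ta \<tau>A p) (piTower Y Ta \<tau>A q)
              = dist (Tword Ta \<tau>A (x 0) l (piX Y Ta \<tau>A x)) (Tword Ta \<tau>A (x 0) l (piX Y Ta \<tau>A y))"
          using pxl qyl ll x0 by (simp add: piTower_def)
        also have "\<dots> \<le> Cl * D / lam ^ length V"
          by (rule Tword_dist[OF lam _ Dle expand bdd_dist Va(2) Va(1) px py xT(2)]) (use Cl in simp)
        also have "\<dots> \<le> Cl * D / lam ^ t"
          apply (rule divide_left_mono)
          using lam Vlen Cl D0 by (auto intro!: power_increasing)
        also have "\<dots> = lam * Cl * D * (1 / lam) ^ s"
          using lam Suc by (simp add: power_one_over field_simps)
        finally show ?thesis using dT by (simp add: D_def)
      qed
    qed
  qed
qed

end
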